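(* Let $u\neq0$, $v$ be parameters and let $\mathrm{e}(y\mathrm{T}_{u^{-1}}\mathbf{D}_{s,t},v)=\sum_{n\ge0}v^{\binom{n}{2}}\frac{y^n}{\{n\}_{s,t}!}(\mathrm{T}_{u^{-1}}\mathbf{D}_{s,t})^n$, acting on the variable $x$. Then (1) for every $\alpha$ (with the convention $\mathbf{D}_{s,t}x^{\beta}=\{\beta\}_{s,t}x^{\beta-1}$ for all exponents $\beta$), as formal series in $y$, $$\mathrm{e}(y\mathrm{T}_{u^{-1}}\mathbf{D}_{s,t},v)\,\big\{u^{\binom{\alpha}{2}}x^{\alpha}\big\}=(x\oplus_{u,v}y)_{s,t}^{(\alpha)};$$ (2) $\mathrm{e}(y\mathrm{T}_{u^{-1}}\mathbf{D}_{s,t},v)\exp_{s,t}(x,u)=\exp_{s,t}(x\oplus_{u,v}y)$, where $\exp_{s,t}(x,u)=\sum_{n\ge0}u^{\binom n2}\frac{x^n}{\{n\}_{s,t}!}$ and $\exp_{s,t}(x\oplus_{u,v}y)=\sum_{n\ge0}\frac{(x\oplus_{u,v}y)^{(n)}_{s,t}}{\{n\}_{s,t}!}$.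
   Context: Let $s,t$ be nonzero reals with $s^2+4t\neq0$, $\varphi=\frac{s+\sqrt{s^2+4t}}{2}$, $\varphi'=\frac{s-\sqrt{s^2+4t}}{2}$, and for a complex exponent $\beta$ (fixed branch of powers) $\{\beta\}_{s,t}=\frac{\varphi^\beta-\varphi'^\beta}{\varphi-\varphi'}$; $\{n\}_{s,t}!=\{1\}_{s,t}\cdots\{n\}_{s,t}$, $\{0\}_{s,t}!=1$; $\left\{{\alpha\atop k}\right\}_{s,t}=\frac{\{\alpha\}_{s,t}\{\alpha-1\}_{s,t}\cdots\{\alpha-k+1\}_{s,t}}{\{k\}_{s,t}!}$; $\binom{\beta}{2}=\beta(\beta-1)/2$. $\mathbf{D}_{s,t}$ is the $(s,t)$-derivative, $\mathbf{D}_{s,t}f(x)=\frac{f(\varphi x)-f(\varphi'x)}{(\varphi-\varphi')x}$, and $\mathrm{T}_af(x)=f(ax)$. The deformed binomial series is $(x\oplus_{u,v}y)_{s,t}^{(\alpha)}=\sum_{n\geq0}\left\{{\alpha\atop n}\right\}_{s,t}u^{\binom{\alpha-n}{2}}v^{\binom{n}{2}}x^{\alpha-n}y^n$. *)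

theory Defs
  imports "HOL-Analysis.Analysis"
begin

text \<open>Roots of z^2 - s z - t (possibly complex); complex powers use the principal branch (powr).\<close>
definition phi :: "real \<Rightarrow> real \<Rightarrow> complex" where
  "phi s t = (complex_of_real s + csqrt (complex_of_real (s^2 + 4*t))) / 2"

definition phi' :: "real \<Rightarrow> real \<Rightarrow> complex" where
  "phi' s t = (complex_of_real s - csqrt (complex_of_real (s^2 + 4*t))) / 2"

definition br :: "real \<Rightarrow> real \<Rightarrow> complex \<Rightarrow> complex" where
  "br s t \<beta> = (phi s t powr \<beta> - phi' s t powr \<beta>) / (phi s t - phi' s t)"

definition brfact :: "real \<Rightarrow> real \<Rightarrow> nat \<Rightarrow> complex" where
  "brfact s t n = (\<Prod>k\<in>{1..n}. br s t (of_nat k))"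

definition brbinom :: "real \<Rightarrow> real \<Rightarrow> complex \<Rightarrow> nat \<Rightarrow> complex" where
  "brbinom s t \<alpha> k = (\<Prod>i<k. br s t (\<alpha> - of_nat i)) / brfact s t k"

definition cbinom2 :: "complex \<Rightarrow> complex" where
  "cbinom2 \<beta> = \<beta> * (\<beta> - 1) / 2"

text \<open>Formal generalized power series in x: f represents the formal sum
  of f(beta) x^beta over all complex exponents beta.\<close>
type_synonym gseries = "complex \<Rightarrow> complex"

definition monom :: "complex \<Rightarrow> complex \<Rightarrow> gseries" where
  "monom c \<beta> = (\<lambda>\<gamma>. if \<gamma> = \<beta> then c else 0)"

text \<open>(s,t)-derivative with the convention D x^beta = {beta} x^(beta-1), extended linearly.\<close>
definition Dst :: "real \<Rightarrow> real \<Rightarrow> gseries \<Rightarrow> gseries" where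
  "Dst s t f = (\<lambda>\<gamma>. br s t (\<gamma> + 1) * f (\<gamma> + 1))"

text \<open>Dilation T_{u^{-1}}: x^beta |-> (x/u)^beta = u^(-beta) x^beta, extended linearly.\<close>
definition Tinv :: "complex \<Rightarrow> gseries \<Rightarrow> gseries" where
  "Tinv u f = (\<lambda>\<gamma>. u powr (- \<gamma>) * f \<gamma>)"

text \<open>e(y T_{u^{-1}} D_{s,t}, v) applied to f, as a formal series in y:
  coefficient of y^n.\<close>
definition eop :: "real \<Rightarrow> real \<Rightarrow> complex \<Rightarrow> complex \<Rightarrow> gseries \<Rightarrow> nat \<Rightarrow> gseries" where
  "eop s t u v f n = (\<lambda>\<gamma>. (v ^ (n choose 2) / brfact s t n) * ((Tinv u \<circ> Dst s t) ^^ n) f \<gamma>)"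

text \<open>Deformed binomial (x (+)_{u,v} y)^{(alpha)}_{s,t}: coefficient of y^n.\<close>
definition oplus :: "real \<Rightarrow> real \<Rightarrow> complex \<Rightarrow> complex \<Rightarrow> complex \<Rightarrow> nat \<Rightarrow> gseries" where
  "oplus s t u v \<alpha> n = monom (brbinom s t \<alpha> n * u powr cbinom2 (\<alpha> - of_nat n) * v ^ (n choose 2))
                               (\<alpha> - of_nat n)"

definition expst :: "real \<Rightarrow> real \<Rightarrow> complex \<Rightarrow> gseries" where
  "expst s t u = (\<lambda>\<gamma>. \<Sum>m. monom (u ^ (m choose 2) / brfact s t m) (of_nat m) \<gamma>)"

text \<open>exp_{s,t}(x (+)_{u,v} y) = sum_n (x (+)_{u,v} y)^{(n)} / {n}!: coefficient of y^k.\<close>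
definition expoplus :: "real \<Rightarrow> real \<Rightarrow> complex \<Rightarrow> complex \<Rightarrow> nat \<Rightarrow> gseries" where
  "expoplus s t u v k = (\<lambda>\<gamma>. \<Sum>n. oplus s t u v (of_nat n) k \<gamma> / brfact s t n)"

end

theory Submission
  imports Defs
begin

lemma iter_formula:
  "((Tinv u \<circ> Dst s t) ^^ n) f \<gamma> =
     (\<Prod>i<n. u powr (-(\<gamma> + of_nat i)) * br s t (\<gamma> + of_nat i + 1)) * f (\<gamma> + of_nat n)"
proof (induction n arbitrary: \<gamma>)
  case 0 then show ?case by simp
next
  case (Suc n)
  have "((Tinv u \<circ> Dst s t) ^^ Suc n) f \<gamma> = u powr (-\<gamma>) * (br s t (\<gamma> + 1) * ((Tinv u \<circ> Dst s t) ^^ n) f (\<gamma> + 1))"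
    by (simp add: Tinv_def Dst_def)
  also have "\<dots> = u powr (-\<gamma>) * br s t (\<gamma> + 1) *
     (\<Prod>i<n. u powr (-(\<gamma> + 1 + of_nat i)) * br s t (\<gamma> + 1 + of_nat i + 1)) * f (\<gamma> + 1 + of_nat n)"
    by (simp add: Suc.IH mult.assoc)
  also have "\<dots> = (\<Prod>i<Suc n. u powr (-(\<gamma> + of_nat i)) * br s t (\<gamma> + of_nat i + 1)) * f (\<gamma> + of_nat (Suc n))"
    by (subst prod.lessThan_Suc_shift) (simp add: algebra_simps)
  finally show ?case .
qed

lemma prod_powr:
  fixes u :: complex and n :: nat assumes "u \<noteq> 0"
  shows "(\<Prod>i<n. u powr (a i)) = u powr (\<Sum>i<n. a i)"
  using assms by (induction n) (simp_all add: powr_add)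

lemma sum_ofnat_c: "(\<Sum>i<(n::nat). of_nat i :: complex) = of_nat n * (of_nat n - 1) / 2"
  by (induction n) (simp_all add: field_simps)

lemma eop_apply:
  assumes "u \<noteq> 0"
  shows "eop s t u v f n \<gamma> = v ^ (n choose 2) / brfact s t n * (\<Prod>i<n. br s t (\<gamma> + of_nat i + 1))
     * u powr (-(of_nat n * \<gamma> + of_nat n * (of_nat n - 1) / 2)) * f (\<gamma> + of_nat n)"
proof -
  have "(\<Prod>i<n. u powr (-(\<gamma> + of_nat i))) = u powr (\<Sum>i<n. -(\<gamma> + of_nat i))"
    by (rule prod_powr[OF assms])
  also have "(\<Sum>i<n. -(\<gamma> + of_nat i)) = -(of_nat n * \<gamma> + of_nat n * (of_nat n - 1) / 2)"
    by (simp only: sum_negf sum.distrib sum_ofnat_c sum_constant) simp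
  finally have P: "(\<Prod>i<n. u powr (-(\<gamma> + of_nat i))) = u powr (-(of_nat n * \<gamma> + of_nat n * (of_nat n - 1) / 2))" .
  show ?thesis
    unfolding eop_def iter_formula prod.distrib P by (simp add: mult.assoc)
qed

lemma part1:
  assumes "u \<noteq> 0"
  shows "eop s t u v (monom (u powr cbinom2 \<alpha>) \<alpha>) n \<gamma> = oplus s t u v \<alpha> n \<gamma>"
proof (cases "\<gamma> = \<alpha> - of_nat n")
  case True
  have B: "(\<Prod>i<n. br s t (\<gamma> + of_nat i + 1)) = (\<Prod>i<n. br s t (\<alpha> - of_nat i))"
  proof -
    have "(\<Prod>i<n. br s t (\<alpha> - of_nat i)) = (\<Prod>i<n. br s t (\<alpha> - of_nat (n - Suc i)))"
      by (rule prod.nat_diff_reindex[symmetric])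
    also have "\<dots> = (\<Prod>i<n. br s t (\<gamma> + of_nat i + 1))"
      by (rule prod.cong) (auto simp: True of_nat_diff intro!: arg_cong[where f="br s t"])
    finally show ?thesis by simp
  qed
  have E: "-(of_nat n * \<gamma> + of_nat n * (of_nat n - 1) / 2) + cbinom2 \<alpha> = cbinom2 (\<alpha> - of_nat n)"
    unfolding True cbinom2_def by (simp add: field_simps)
  have "eop s t u v (monom (u powr cbinom2 \<alpha>) \<alpha>) n \<gamma> =
     v ^ (n choose 2) / brfact s t n * (\<Prod>i<n. br s t (\<alpha> - of_nat i))
     * (u powr (-(of_nat n * \<gamma> + of_nat n * (of_nat n - 1) / 2)) * u powr cbinom2 \<alpha>)"
    unfolding eop_apply[OF assms] B by (simp add: monom_def True mult.assoc)
  also have "\<dots> = v ^ (n choose 2) / brfact s t n * (\<Prod>i<n. br s t (\<alpha> - of_nat i))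
     * u powr cbinom2 (\<alpha> - of_nat n)"
    by (subst powr_add[symmetric], subst E) (rule refl)
  also have "\<dots> = oplus s t u v \<alpha> n \<gamma>"
    by (simp add: oplus_def monom_def True brbinom_def)
  finally show ?thesis .
next
  case False
  then have "\<gamma> + of_nat n \<noteq> \<alpha>" by auto
  then show ?thesis using False
    by (simp add: eop_apply[OF assms] oplus_def monom_def)
qed


lemma choose2_c: "(of_nat (N choose 2) :: complex) = of_nat N * (of_nat N - 1) / 2"
proof (induction N)
  case 0 then show ?case by simp
next
  case (Suc N)
  have "Suc N choose 2 = (N choose 2) + N"
    by (simp add: numeral_2_eq_2)
  then show ?case using Suc by (simp add: field_simps)
qed

lemma expst_nat: "expst s t u (of_nat N) = u ^ (N choose 2) / brfact s t N"
proof -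
  have "(\<lambda>m. monom (u ^ (m choose 2) / brfact s t m) (of_nat m) (of_nat N :: complex))
        = (\<lambda>m. if m = N then u ^ (m choose 2) / brfact s t m else 0)"
    by (auto simp: monom_def)
  then have "expst s t u (of_nat N) = suminf (\<lambda>m. if m = N then u ^ (m choose 2) / brfact s t m else 0)"
    by (simp add: expst_def)
  also have "\<dots> = u ^ (N choose 2) / brfact s t N"
    by (rule sums_unique[OF sums_single, symmetric])
  finally show ?thesis .
qed

lemma expst_not: "(\<forall>N. \<gamma> \<noteq> of_nat N) \<Longrightarrow> expst s t u \<gamma> = 0"
  by (simp add: expst_def monom_def)

lemma expoplus_nat: "\<gamma> + of_nat k = of_nat N \<Longrightarrow>
   expoplus s t u v k \<gamma> = oplus s t u v (of_nat N) k \<gamma> / brfact s t N"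
proof -
  assume h: "\<gamma> + of_nat k = of_nat N"
  have "(\<lambda>n. oplus s t u v (of_nat n) k \<gamma> / brfact s t n)
        = (\<lambda>n. if n = N then oplus s t u v (of_nat n) k \<gamma> / brfact s t n else 0)"
  proof
    fix n show "oplus s t u v (of_nat n) k \<gamma> / brfact s t n
        = (if n = N then oplus s t u v (of_nat n) k \<gamma> / brfact s t n else 0)"
    proof (cases "n = N")
      case False
      have "\<gamma> \<noteq> of_nat n - of_nat k"
      proof
        assume "\<gamma> = of_nat n - of_nat k"
        with h have "(of_nat n :: complex) = of_nat N" by simp
        with False show False by simp
      qed
      then show ?thesis using False by (simp add: oplus_def monom_def)
    qed simp
  qed
  then have "expoplus s t u v k \<gamma> = suminf (\<lambda>n. if n = N then oplus s t u v (of_nat n) k \<gamma> / brfact s t n else 0)"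
    unfolding expoplus_def by (rule arg_cong[where f=suminf])
  also have "\<dots> = oplus s t u v (of_nat N) k \<gamma> / brfact s t N"
    by (rule sums_unique[OF sums_single, symmetric])
  finally show ?thesis .
qed

lemma expoplus_not: "(\<forall>N. \<gamma> + of_nat k \<noteq> of_nat N) \<Longrightarrow> expoplus s t u v k \<gamma> = 0"
proof -
  assume h: "\<forall>N. \<gamma> + of_nat k \<noteq> of_nat N"
  have "\<gamma> \<noteq> of_nat n - of_nat k" for n
  proof
    assume "\<gamma> = of_nat n - of_nat k"
    then have "\<gamma> + of_nat k = of_nat n" by simp
    with h show False by blast
  qed
  then show ?thesis by (simp add: expoplus_def oplus_def monom_def)
qed

theorem mainTheorem5:
  fixes s t :: real and u v :: complex
  assumes "s \<noteq> 0" and "t \<noteq> 0" and "s^2 + 4*t \<noteq> 0" and "u \<noteq> 0"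
  shows "(\<forall>\<alpha>::complex. eop s t u v (monom (u powr cbinom2 \<alpha>) \<alpha>) = oplus s t u v \<alpha>)
         \<and> eop s t u v (expst s t u) = expoplus s t u v"
proof
  show "\<forall>\<alpha>::complex. eop s t u v (monom (u powr cbinom2 \<alpha>) \<alpha>) = oplus s t u v \<alpha>"
    using part1[OF assms(4)] by (auto intro!: ext)
  show "eop s t u v (expst s t u) = expoplus s t u v"
  proof (intro ext)
    fix k \<gamma>
    show "eop s t u v (expst s t u) k \<gamma> = expoplus s t u v k \<gamma>"
    proof (cases "\<exists>N. \<gamma> + of_nat k = of_nat N")
      case True
      then obtain N where N: "\<gamma> + of_nat k = of_nat N" by blast
      have U: "u ^ (N choose 2) = u powr cbinom2 (of_nat N)"
      proof -
        have "cbinom2 (of_nat N) = of_nat (N choose 2)"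
          by (simp add: cbinom2_def choose2_c)
        then show ?thesis using assms(4) by (simp add: powr_nat')
      qed
      have "eop s t u v (expst s t u) k \<gamma>
          = eop s t u v (monom (u powr cbinom2 (of_nat N)) (of_nat N)) k \<gamma> / brfact s t N"
        unfolding eop_apply[OF assms(4)] N expst_nat U by (simp add: monom_def)
      also have "\<dots> = oplus s t u v (of_nat N) k \<gamma> / brfact s t N"
        by (simp add: part1[OF assms(4)])
      also have "\<dots> = expoplus s t u v k \<gamma>"
        by (simp add: expoplus_nat[OF N])
      finally show ?thesis .
    next
      case False
      then have "\<forall>N. \<gamma> + of_nat k \<noteq> of_nat N" by blast
      then have "\<forall>N. \<gamma> + of_nat k \<noteq> of_nat N" by blast
      then have "expst s t u (\<gamma> + of_nat k) = 0" "expoplus s t u v k \<gamma> = 0"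
        by (rule expst_not, rule expoplus_not)
      then show ?thesis
        unfolding eop_apply[OF assms(4)] by simp
    qed
  qed
qed

end
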